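(* Let $\beta\in(0,1)$, $T\ge1$, and $\mathbf{x}_0,\mathbf{x}_1,\dots,\mathbf{x}_T\in\mathbb{R}^d$. For $n\in[T]$ let $q_{n,s}:=\beta^{n-s}\frac{1-\beta}{1-\beta^n}$ ($s=1,\dots,n$), let $\mathbf{X}_n$ be the random vector equal to $\mathbf{x}_s$ with probability $q_{n,s}$, and $\overline{\mathbf{x}}_n:=\mathbb{E}[\mathbf{X}_n]$. Let $\tau\in[T]$ be random with $\Pr(\tau=t)=\frac{1-\beta^t}{T}$ for $t\le T-1$ and $\Pr(\tau=T)=\frac{1-\beta^T}{(1-\beta)T}$. Then $$\mathbb{E}_\tau\mathbb{E}_{\mathbf{X}_\tau}\|\mathbf{X}_\tau-\overline{\mathbf{x}}_\tau\|^2\le\frac{2\beta}{(1-\beta)^2T}\sum_{n=1}^T\|\mathbf{x}_n-\mathbf{x}_{n-1}\|^2.$$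
   Context: Norms are Euclidean. *)

theory Defs
  imports "HOL-Analysis.Analysis"
begin

definition qw :: "real \<Rightarrow> nat \<Rightarrow> nat \<Rightarrow> real" where
  "qw \<beta> n s = \<beta> ^ (n - s) * (1 - \<beta>) / (1 - \<beta> ^ n)"

definition xbar :: "real \<Rightarrow> (nat \<Rightarrow> 'a::real_vector) \<Rightarrow> nat \<Rightarrow> 'a" where
  "xbar \<beta> x n = (\<Sum>s=1..n. qw \<beta> n s *\<^sub>R x s)"

definition ptau :: "real \<Rightarrow> nat \<Rightarrow> nat \<Rightarrow> real" where
  "ptau \<beta> T t = (if t = T then (1 - \<beta> ^ T) / ((1 - \<beta>) * real T)
                  else (1 - \<beta> ^ t) / real T)"

end

theory Submission
  imports Defs "HOL-Analysis.Analysis"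
begin

definition DD :: "(nat \<Rightarrow> real) \<Rightarrow> nat \<Rightarrow> nat \<Rightarrow> real" where
  "DD d s t = (\<Sum>k=Suc s..t. d k)"
definition AA :: "real \<Rightarrow> (nat \<Rightarrow> real) \<Rightarrow> nat \<Rightarrow> real" where
  "AA b d t = (\<Sum>s=1..t. b^(t-s) * real(t-s) * DD d s t)"
definition EE :: "real \<Rightarrow> (nat \<Rightarrow> real) \<Rightarrow> nat \<Rightarrow> real" where
  "EE b d T = (\<Sum>s=1..T. b^(Suc T - s) * DD d s T)"
definition II :: "real \<Rightarrow> nat \<Rightarrow> real" where
  "II b T = (\<Sum>s=1..T. b^(Suc T - s))"
definition JJ :: "real \<Rightarrow> nat \<Rightarrow> real" where
  "JJ b T = (\<Sum>s=1..T. b^(Suc T - s) * real (Suc T - s))"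
definition FF :: "real \<Rightarrow> (nat \<Rightarrow> real) \<Rightarrow> nat \<Rightarrow> real" where
  "FF b d T = (\<Sum>k=1..T. b^(Suc (Suc T) - k) * d k / (1-b))"
definition HH :: "real \<Rightarrow> nat \<Rightarrow> real" where
  "HH b m = (b + b^2 - b^(Suc m))/(1-b)^2"

lemma aux1: "(c::real) \<noteq> 0 \<Longrightarrow> b*(b/c^2) + b*(b/c) + b = (b*b + b*b*c + b*c^2)/c^2"
  by (simp add: field_simps power2_eq_square)

lemma DD_Suc: "s \<le> t \<Longrightarrow> DD d s (Suc t) = DD d s t + d (Suc t)"
  by (simp add: DD_def)

lemma DD_self: "DD d t t = 0"
  by (simp add: DD_def)

lemma AA_Suc: "AA b d (Suc T) = b * AA b d T + EE b d T + d (Suc T) * JJ b T"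
proof -
  have "AA b d (Suc T) = (\<Sum>s=1..T. b^(Suc T-s) * real(Suc T-s) * DD d s (Suc T))"
    unfolding AA_def by (simp)
  also have "\<dots> = (\<Sum>s=1..T. b * (b^(T-s) * real(T-s) * DD d s T) + b^(Suc T - s) * DD d s T
        + d (Suc T) * (b^(Suc T - s) * real (Suc T - s)))"
  proof (rule sum.cong)
    fix s assume "s \<in> {1..T}"
    then have st: "s \<le> T" by simp
    then have e1: "Suc T - s = Suc (T - s)" by simp
    have e2: "real (Suc (T-s)) = real (T-s) + 1" by simp
    show "b^(Suc T-s) * real(Suc T-s) * DD d s (Suc T) = b * (b^(T-s) * real(T-s) * DD d s T) + b^(Suc T - s) * DD d s T
        + d (Suc T) * (b^(Suc T - s) * real (Suc T - s))"
      unfolding DD_Suc[OF st] e1 e2 by (simp add: algebra_simps)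
  qed simp
  also have "\<dots> = b * AA b d T + EE b d T + d (Suc T) * JJ b T"
    unfolding AA_def EE_def JJ_def by (simp add: sum.distrib sum_distrib_left)
  finally show ?thesis .
qed

lemma II_Suc: "II b (Suc T) = b * II b T + b"
proof -
  have "II b (Suc T) = (\<Sum>s=1..T. b * b^(Suc T - s)) + b"
    unfolding II_def by (auto simp: Suc_diff_le intro!: sum.cong)
  then show ?thesis unfolding II_def by (simp add: sum_distrib_left)
qed

lemma JJ_Suc: "JJ b (Suc T) = b * JJ b T + b * II b T + b"
proof -
  have "JJ b (Suc T) = (\<Sum>s=1..T. b * (b^(Suc T - s) * real (Suc T - s)) + b * b^(Suc T - s)) + b"
    unfolding JJ_def by (auto simp: Suc_diff_le algebra_simps intro!: sum.cong)
  then show ?thesis unfolding II_def JJ_def by (simp add: sum_distrib_left sum.distrib)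
qed

lemma EE_Suc: "EE b d (Suc T) = b * EE b d T + d (Suc T) * b * II b T"
proof -
  have "EE b d (Suc T) = (\<Sum>s=1..T. b * (b^(Suc T - s) * DD d s T) + d (Suc T) * b * b^(Suc T - s))"
    unfolding EE_def by (auto simp: Suc_diff_le DD_Suc DD_self algebra_simps intro!: sum.cong)
  then show ?thesis unfolding II_def EE_def by (simp add: sum_distrib_left sum.distrib)
qed

lemma FF_Suc: "FF b d (Suc T) = b * FF b d T + b * b * d (Suc T) / (1 - b)"
proof -
  have "FF b d (Suc T) = (\<Sum>k=1..T. b * (b^(Suc (Suc T) - k) * d k / (1-b))) + b * b * d (Suc T) / (1 - b)"
    unfolding FF_def by (auto simp: Suc_diff_le mult.assoc intro!: sum.cong)
  then show ?thesis unfolding FF_def by (simp add: sum_distrib_left)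
qed

lemma II_le: assumes "0 < b" "b < 1" shows "II b T \<le> b / (1 - b)"
proof (induction T)
  case 0 then show ?case using assms by (simp add: II_def)
next
  case (Suc T)
  have "II b (Suc T) \<le> b * (b / (1-b)) + b" unfolding II_Suc using Suc assms
    by (smt (verit) mult_left_mono times_divide_eq_right)
  also have "\<dots> = b / (1 - b)" using assms by (simp add: field_simps)
  finally show ?case .
qed

lemma II_ge: assumes "0 < b" shows "0 \<le> II b T"
  unfolding II_def using assms by (intro sum_nonneg) simp

lemma JJ_le: assumes "0 < b" "b < 1" shows "JJ b T \<le> b / (1 - b)^2"
proof (induction T)
  case 0 then show ?case using assms by (simp add: JJ_def)
next
  case (Suc T)
  have "JJ b (Suc T) \<le> b * (b / (1-b)^2) + b * (b / (1-b)) + b" unfolding JJ_Suc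
    using Suc assms II_le[OF assms, of T]
    by (intro add_mono mult_left_mono) auto
  also have "\<dots> = b / (1 - b)^2"
  proof -
    have n: "(1-b) \<noteq> 0" using assms by simp
    have "b*b + b*b*(1-b) + b*(1-b)^2 = b" by (simp add: algebra_simps power2_eq_square)
    then show ?thesis using aux1[OF n, of b] by simp
  qed
  finally show ?case .
qed

lemma EE_le: assumes "0 < b" "b < 1" "\<And>k. 0 \<le> d k" shows "EE b d T \<le> FF b d T"
proof (induction T)
  case 0 then show ?case by (simp add: EE_def FF_def)
next
  case (Suc T)
  have "d (Suc T) * b * II b T \<le> d (Suc T) * b * (b / (1 - b))"
    using II_le[OF assms(1,2)] assms by (intro mult_left_mono) auto
  also have "\<dots> = b * b * d (Suc T) / (1 - b)"
    by simp
  finally show ?case unfolding EE_Suc FF_Suc using Suc assms by (smt (verit) mult_left_mono)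
qed

lemma HH_Suc: assumes "b < 1" shows "HH b (Suc m) = HH b m + b^(Suc m)/(1-b)"
proof -
  have n: "1 - b \<noteq> 0" using assms by simp
  have g: "\<And>y c::real. c \<noteq> 0 \<Longrightarrow> y / c = (y * c) / c^2" by (simp add: power2_eq_square)
  have "b^(Suc (Suc m)) = b^(Suc m) * b" by simp
  then have "b^(Suc m) - b^(Suc (Suc m)) = b^(Suc m) * (1 - b)" by (simp add: algebra_simps)
  then have "b^(Suc m)/(1-b) = (b^(Suc m) - b^(Suc (Suc m)))/(1-b)^2"
    using g[OF n] by simp
  then show ?thesis unfolding HH_def by (simp add: diff_divide_distrib add_divide_distrib)
qed

lemma HH_le: assumes "0 < b" "b < 1" shows "HH b m \<le> 2 * b / (1 - b)^2"
proof -
  have "b^2 \<le> b" using assms by (simp add: power2_eq_square mult_left_le_one_le)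
  moreover have "0 \<le> b^(Suc m)" using assms by simp
  ultimately have "b + b^2 - b^(Suc m) \<le> 2 * b" by simp
  then show ?thesis unfolding HH_def using assms by (simp add: divide_right_mono)
qed

lemma main_seq: assumes "0 < b" "b < 1" "\<And>k. 0 \<le> d k"
  shows "(\<Sum>t=1..<T. (1-b) * AA b d t) + AA b d T \<le> (\<Sum>k=1..T. HH b (Suc T - k) * d k)"
proof (induction T)
  case 0 then show ?case by (simp add: AA_def)
next
  case (Suc T)
  have L: "(\<Sum>t=1..<Suc T. (1-b) * AA b d t) = (\<Sum>t=1..<T. (1-b) * AA b d t) + (1-b) * AA b d T"
    by (cases T) (auto simp: AA_def)
  have R: "(\<Sum>k=1..Suc T. HH b (Suc (Suc T) - k) * d k) = (\<Sum>k=1..T. HH b (Suc T - k) * d k) + FF b d T + HH b 1 * d (Suc T)"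
  proof -
    have "(\<Sum>k=1..T. HH b (Suc (Suc T) - k) * d k) = (\<Sum>k=1..T. HH b (Suc T - k) * d k + b^(Suc (Suc T) - k) * d k / (1-b))"
    proof (rule sum.cong)
      fix k assume "k \<in> {1..T}"
      then have e: "Suc (Suc T) - k = Suc (Suc T - k)" by auto
      show "HH b (Suc (Suc T) - k) * d k = HH b (Suc T - k) * d k + b^(Suc (Suc T) - k) * d k / (1-b)"
        unfolding e HH_Suc[OF assms(2)] by (simp add: algebra_simps)
    qed simp
    then show ?thesis unfolding FF_def by (simp add: sum.distrib)
  qed
  have H1: "HH b 1 = b / (1-b)^2" unfolding HH_def by (simp add: power2_eq_square)
  have "(\<Sum>t=1..<Suc T. (1-b) * AA b d t) + AA b d (Suc T)
      = ((\<Sum>t=1..<T. (1-b) * AA b d t) + AA b d T) + EE b d T + d (Suc T) * JJ b T"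
    unfolding L AA_Suc by (simp add: algebra_simps)
  also have "\<dots> \<le> (\<Sum>k=1..T. HH b (Suc T - k) * d k) + FF b d T + d (Suc T) * (b / (1-b)^2)"
    using Suc EE_le[OF assms] JJ_le[OF assms(1,2), of T] assms(3)[of "Suc T"]
    by (intro add_mono mult_left_mono) auto
  also have "\<dots> = (\<Sum>k=1..Suc T. HH b (Suc (Suc T) - k) * d k)"
    unfolding R H1 by simp
  finally show ?case .
qed


lemma var_le:
  fixes x :: "nat \<Rightarrow> 'a::real_inner"
  assumes "finite S" "(\<Sum>s\<in>S. q s) = 1" "\<And>s. s \<in> S \<Longrightarrow> 0 \<le> q s"
  shows "(\<Sum>s\<in>S. q s * (norm (x s - (\<Sum>s\<in>S. q s *\<^sub>R x s)))\<^sup>2) \<le> (\<Sum>s\<in>S. q s * (norm (x s - c))\<^sup>2)"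
proof -
  define m where "m = (\<Sum>s\<in>S. q s *\<^sub>R x s)"
  have gen: "\<And>u v::'a. inner (u + v) (u + v) = (norm u)\<^sup>2 + 2 * inner u v + (norm v)\<^sup>2"
    by (simp add: inner_add_left inner_add_right inner_commute power2_norm_eq_inner)
  have e: "(norm (x s - c))\<^sup>2 = (norm (x s - m))\<^sup>2 + 2 * inner (x s - m) (m - c) + (norm (m - c))\<^sup>2" for s
  proof -
    have "x s - c = (x s - m) + (m - c)" by simp
    then have "(norm (x s - c))\<^sup>2 = inner ((x s - m) + (m - c)) ((x s - m) + (m - c))"
      by (metis power2_norm_eq_inner)
    also have "\<dots> = (norm (x s - m))\<^sup>2 + 2 * inner (x s - m) (m - c) + (norm (m - c))\<^sup>2"
      using gen by blast
    finally show ?thesis .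
  qed
  have z: "(\<Sum>s\<in>S. q s *\<^sub>R (x s - m)) = 0"
    using assms(2) by (simp add: scaleR_diff_right sum_subtractf m_def flip: scaleR_left.sum)
  have "(\<Sum>s\<in>S. q s * inner (x s - m) (m - c)) = inner (\<Sum>s\<in>S. q s *\<^sub>R (x s - m)) (m - c)"
    by (simp add: inner_sum_left)
  then have z2: "(\<Sum>s\<in>S. q s * inner (x s - m) (m - c)) = 0" using z by simp
  have "(\<Sum>s\<in>S. q s * (norm (x s - c))\<^sup>2) = (\<Sum>s\<in>S. q s * (norm (x s - m))\<^sup>2) + 2 * (\<Sum>s\<in>S. q s * inner (x s - m) (m - c)) + (\<Sum>s\<in>S. q s) * (norm (m - c))\<^sup>2"
  proof -
    have "(\<Sum>s\<in>S. q s * (norm (x s - c))\<^sup>2) = (\<Sum>s\<in>S. q s * (norm (x s - m))\<^sup>2 + 2 * (q s * inner (x s - m) (m - c)) + q s * (norm (m - c))\<^sup>2)"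
      by (rule sum.cong) (simp_all only: e distrib_left mult.left_commute)
    also have "\<dots> = (\<Sum>s\<in>S. q s * (norm (x s - m))\<^sup>2) + 2 * (\<Sum>s\<in>S. q s * inner (x s - m) (m - c)) + (\<Sum>s\<in>S. q s) * (norm (m - c))\<^sup>2"
      by (simp only: sum.distrib sum_distrib_left[symmetric] sum_distrib_right[symmetric])
    finally show ?thesis .
  qed
  then have "(\<Sum>s\<in>S. q s * (norm (x s - c))\<^sup>2) = (\<Sum>s\<in>S. q s * (norm (x s - m))\<^sup>2) + (norm (m - c))\<^sup>2"
    using z2 assms(2) by simp
  then show ?thesis unfolding m_def[symmetric] by simp
qed

lemma tele:
  fixes x :: "nat \<Rightarrow> 'a::real_normed_vector"
  assumes "s \<le> t"
  shows "x t - x s = (\<Sum>k=Suc s..t. x k - x (k - 1))"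
  using assms
proof (induction t rule: dec_induct)
  case base then show ?case by simp
next
  case (step n)
  have "x (Suc n) - x s = (x n - x s) + (x (Suc n) - x n)" by simp
  also have "\<dots> = (\<Sum>k=Suc s..n. x k - x (k - 1)) + (x (Suc n) - x n)"
    by (simp only: step.IH)
  also have "\<dots> = (\<Sum>k=Suc s..Suc n. x k - x (k - 1))"
    using step.hyps by simp
  finally show ?case .
qed

lemma norm_tele:
  fixes x :: "nat \<Rightarrow> 'a::real_normed_vector"
  assumes "s \<le> t"
  shows "(norm (x s - x t))\<^sup>2 \<le> real (t - s) * DD (\<lambda>k. (norm (x k - x (k - 1)))\<^sup>2) s t"
proof -
  have "norm (x s - x t) = norm (x t - x s)" by (simp add: norm_minus_commute)
  also have "\<dots> \<le> (\<Sum>k=Suc s..t. norm (x k - x (k - 1)))"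
    unfolding tele[OF assms] by (rule norm_sum)
  finally have a: "norm (x s - x t) \<le> (\<Sum>k=Suc s..t. norm (x k - x (k - 1)))" .
  have "(norm (x s - x t))\<^sup>2 \<le> (\<Sum>k=Suc s..t. norm (x k - x (k - 1)))\<^sup>2"
    using a by (intro power_mono) auto
  also have "\<dots> \<le> (\<Sum>k=Suc s..t. (norm (x k - x (k - 1)))\<^sup>2) * card {Suc s..t}"
    by (rule sum_squared_le_sum_of_squares)
  finally show ?thesis unfolding DD_def by (simp add: mult.commute)
qed

definition GG :: "real \<Rightarrow> nat \<Rightarrow> real" where
  "GG b t = (\<Sum>s=1..t. b^(t-s))"

lemma GG_eq: "(1 - b) * GG b t = 1 - b ^ t"
proof (induction t)
  case 0 then show ?case by (simp add: GG_def)
next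
  case (Suc t)
  have "GG b (Suc t) = (\<Sum>s=1..t. b * b^(t-s)) + 1"
    unfolding GG_def by (auto simp: Suc_diff_le intro!: sum.cong)
  then have "GG b (Suc t) = b * GG b t + 1" unfolding GG_def by (simp add: sum_distrib_left)
  then have "(1-b)*GG b (Suc t) = b*((1-b)*GG b t) + (1-b)" by (simp add: algebra_simps)
  also have "\<dots> = b*(1 - b^t) + (1-b)" using Suc by simp
  also have "\<dots> = 1 - b^Suc t" by (simp add: algebra_simps)
  finally show ?case .
qed

lemma qw_sum: assumes "0 < b" "b < 1" "1 \<le> t" shows "(\<Sum>s=1..t. qw b t s) = 1"
proof -
  have "b ^ t < 1" using assms by (simp add: power_less_one_iff)
  then have n: "1 - b ^ t \<noteq> 0" by simp
  have "(\<Sum>s=1..t. qw b t s) = (1 - b) * GG b t / (1 - b ^ t)"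
    unfolding qw_def GG_def by (simp add: sum_distrib_left sum_divide_distrib algebra_simps)
  then show ?thesis using GG_eq[of b t] n by simp
qed

lemma qw_nonneg: assumes "0 < b" "b < 1" "1 \<le> t" shows "0 \<le> qw b t s"
proof -
  have "b ^ t < 1" using assms by (simp add: power_less_one_iff)
  then show ?thesis unfolding qw_def using assms by simp
qed

lemma ptau_qw: assumes "0 < b" "b < 1" "1 \<le> t" "1 \<le> T"
  shows "ptau b T t * qw b t s = (if t = T then 1 else 1 - b) / real T * b^(t-s)"
proof -
  have "b ^ t < 1" using assms by (simp add: power_less_one_iff)
  then have n: "1 - b ^ t \<noteq> 0" by simp
  have n2: "1 - b \<noteq> 0" using assms by simp
  have T: "real T \<noteq> 0" using assms by simp
  have g1: "\<And>A B C D::real. A \<noteq> 0 \<Longrightarrow> C \<noteq> 0 \<Longrightarrow> D \<noteq> 0 \<Longrightarrow> A/(C*D) * (B*C/A) = 1/D*B"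
    by (simp add: field_simps)
  have g2: "\<And>A B C D::real. A \<noteq> 0 \<Longrightarrow> C \<noteq> 0 \<Longrightarrow> D \<noteq> 0 \<Longrightarrow> A/D * (B*C/A) = C/D*B"
    by (simp add: field_simps)
  show ?thesis
  proof (cases "t = T")
    case True then show ?thesis unfolding ptau_def qw_def using g1[OF n n2 T] by simp
  next
    case False then show ?thesis unfolding ptau_def qw_def using g2[OF n n2 T] by simp
  qed
qed


theorem lemma7:
  fixes \<beta> :: real and T :: nat and x :: "nat \<Rightarrow> 'a::euclidean_space"
  assumes "0 < \<beta>" "\<beta> < 1" "T \<ge> 1"
  shows "(\<Sum>t=1..T. ptau \<beta> T t * (\<Sum>s=1..t. qw \<beta> t s * (norm (x s - xbar \<beta> x t))\<^sup>2))
         \<le> 2 * \<beta> / ((1 - \<beta>)\<^sup>2 * real T) * (\<Sum>n=1..T. (norm (x n - x (n - 1)))\<^sup>2)"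
proof -
  define d where "d = (\<lambda>k. (norm (x k - x (k - 1)))\<^sup>2)"
  have d0: "\<And>k. 0 \<le> d k" unfolding d_def by simp
  define w where "w = (\<lambda>t. if t = T then 1 else 1 - \<beta>)"
  have step1: "ptau \<beta> T t * (\<Sum>s=1..t. qw \<beta> t s * (norm (x s - xbar \<beta> x t))\<^sup>2) \<le> w t / real T * AA \<beta> d t"
    if t: "t \<in> {1..T}" for t
  proof -
    from t have t1: "1 \<le> t" and tT: "t \<le> T" by auto
    have "\<beta> ^ t \<le> 1" using assms by (simp add: power_le_one)
    then have pt: "0 \<le> ptau \<beta> T t" unfolding ptau_def using assms by auto
    have "(\<Sum>s=1..t. qw \<beta> t s * (norm (x s - xbar \<beta> x t))\<^sup>2) \<le> (\<Sum>s=1..t. qw \<beta> t s * (norm (x s - x t))\<^sup>2)"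
      unfolding xbar_def
      by (rule var_le) (use qw_sum[OF assms(1,2) t1] qw_nonneg[OF assms(1,2) t1] in auto)
    also have "\<dots> \<le> (\<Sum>s=1..t. qw \<beta> t s * (real (t - s) * DD d s t))"
    proof (rule sum_mono, rule mult_left_mono)
      fix s assume "s \<in> {1..t}"
      then have "s \<le> t" by simp
      then show "(norm (x s - x t))\<^sup>2 \<le> real (t - s) * DD d s t"
        unfolding d_def by (rule norm_tele)
    qed (rule qw_nonneg[OF assms(1,2) t1])
    finally have "ptau \<beta> T t * (\<Sum>s=1..t. qw \<beta> t s * (norm (x s - xbar \<beta> x t))\<^sup>2)
        \<le> ptau \<beta> T t * (\<Sum>s=1..t. qw \<beta> t s * (real (t - s) * DD d s t))"
      using pt by (rule mult_left_mono)
    also have "\<dots> = (\<Sum>s=1..t. (ptau \<beta> T t * qw \<beta> t s) * (real (t - s) * DD d s t))"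
      by (simp add: sum_distrib_left mult.assoc)
    also have "\<dots> = (\<Sum>s=1..t. w t / real T * (\<beta>^(t-s) * real (t - s) * DD d s t))"
      unfolding ptau_qw[OF assms(1,2) t1 assms(3)] w_def by (simp add: mult.assoc)
    also have "\<dots> = w t / real T * AA \<beta> d t"
      unfolding AA_def by (simp add: sum_distrib_left)
    finally show ?thesis .
  qed
  have "(\<Sum>t=1..T. ptau \<beta> T t * (\<Sum>s=1..t. qw \<beta> t s * (norm (x s - xbar \<beta> x t))\<^sup>2))
      \<le> (\<Sum>t=1..T. w t / real T * AA \<beta> d t)"
    by (rule sum_mono) (rule step1)
  also have "\<dots> = w T / real T * AA \<beta> d T + (\<Sum>t=1..<T. w t / real T * AA \<beta> d t)"
    using assms(3) by (rule sum.last_plus)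
  also have "(\<Sum>t=1..<T. w t / real T * AA \<beta> d t) = (\<Sum>t=1..<T. 1 / real T * ((1-\<beta>) * AA \<beta> d t))"
    by (rule sum.cong) (auto simp: w_def)
  also have "w T / real T * AA \<beta> d T + (\<Sum>t=1..<T. 1 / real T * ((1-\<beta>) * AA \<beta> d t))
      = 1 / real T * ((\<Sum>t=1..<T. (1-\<beta>) * AA \<beta> d t) + AA \<beta> d T)"
    by (simp add: w_def sum_distrib_left[symmetric] distrib_left sum_divide_distrib[symmetric])
  also have "\<dots> \<le> 1 / real T * (\<Sum>k=1..T. HH \<beta> (Suc T - k) * d k)"
    by (rule mult_left_mono) (use main_seq[OF assms(1,2) d0] in auto)
  also have "\<dots> \<le> 1 / real T * (\<Sum>k=1..T. 2 * \<beta> / (1 - \<beta>)^2 * d k)"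
    by (intro mult_left_mono sum_mono mult_right_mono HH_le[OF assms(1,2)] d0) auto
  also have "\<dots> = 2 * \<beta> / ((1 - \<beta>)\<^sup>2 * real T) * (\<Sum>n=1..T. (norm (x n - x (n - 1)))\<^sup>2)"
    unfolding d_def by (simp add: sum_distrib_left mult.commute)
  finally show ?thesis .
qed

end
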